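(* Let $n\ge1$ and let $c\in\mathfrak{S}_{n+1}$ be a Coxeter element. For every $\boldsymbol\pi\in\mathcal{ST}(c)$, we have $\mathrm{rev}_n(\boldsymbol\pi)\in\mathcal{ST}(\mathrm{rev}_{n+1}(c))$.
   Context: Coxeter element of $\mathfrak{S}_{n+1}$: product of $s_1,\dots,s_n$ ($s_i=(i,i+1)$), each exactly once; it is a long cycle $(c_1=1<c_2<\dots<c_m=n+1>c_{m+1}>\dots>c_{n+1})$, with $\mathbf L_c=\{c_2,\dots,c_{m-1}\}$, $\mathbf R_c=\{c_{m+1},\dots,c_{n+1}\}$. $\mathrm{rev}_{n+1}(c)=wcw^{-1}$ where $w\in\mathfrak{S}_{n+1}$, $w(i)=n+2-i$. For an $n$-tuple of partitions $\boldsymbol\pi=(\pi^1,\dots,\pi^n)$, $\mathrm{rev}_n(\boldsymbol\pi)=(\pi^n,\pi^{n-1},\dots,\pi^1)$. Storability: partitions are weakly decreasing sequences of nonnegative integers with finitely many nonzero terms. A pair $(\lambda,\mu)$ is storable if $\lambda_i\ge\mu_i\ge\lambda_{i+1}$ for all $i\ge1$. A triple $(\lambda,\mu,\nu)$ is $(\boxplus,\boxplus)$-storable if $(\lambda,\mu)$ and $(\nu,\mu)$ are storable; $(\boxplus,\boxminus)$-storable if $(\lambda,\mu)$ and $(\mu,\nu)$ are; $(\boxminus,\boxplus)$-storable if $(\mu,\lambda)$ and $(\nu,\mu)$ are; $(\boxminus,\boxminus)$-storable if $(\mu,\lambda)$ and $(\mu,\nu)$ are. For $\boldsymbol\pi=(\pi^1,\dots,\pi^n)$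 set $\pi^0=\pi^{n+1}=(0)$; $\boldsymbol\pi$ is $X$-storable at $i$ if $(\pi^{i-1},\pi^i,\pi^{i+1})$ is $X$-storable. For $\mathbf A\subset\mathbb{Z}$, $\mathbf A[-1]=\{a-1:a\in\mathbf A\}$. With $\mathbf L=\mathbf L_c\cup\{1\}$, $\mathbf R=\mathbf R_c\cup\{n+1\}$, $\boldsymbol\pi$ is $c$-storable ($\boldsymbol\pi\in\mathcal{ST}(c)$) if for every $i\in\{1,\dots,n\}$: it is $(\boxplus,\boxplus)$-storable at $i$ if $i\notin\mathbf L\cup\mathbf R[-1]$; $(\boxplus,\boxminus)$-storable at $i$ if $i\in\mathbf R[-1]\setminus\mathbf L$; $(\boxminus,\boxplus)$-storable at $i$ if $i\in\mathbf L\setminus\mathbf R[-1]$; $(\boxminus,\boxminus)$-storable at $i$ if $i\in\mathbf L\cap\mathbf R[-1]$; and $\pi^k=(0)$ for $k\notin\{\min\mathbf L,\dots,\max\mathbf R\}$. *)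

theory Defs
  imports Main
begin

definition stransp :: "nat \<Rightarrow> nat \<Rightarrow> nat" where
  "stransp i = (\<lambda>x. if x = i then Suc i else if x = Suc i then i else x)"

(* Coxeter element of S_{n+1} (permutations of {1..n+1}, identity elsewhere):
   a product of s_1,...,s_n, each exactly once, in some order. *)
definition coxeter :: "nat \<Rightarrow> (nat \<Rightarrow> nat) \<Rightarrow> bool" where
  "coxeter n c \<longleftrightarrow> (\<exists>xs. distinct xs \<and> set xs = {1..n} \<and>
      c = foldr (\<lambda>i f. stransp i \<circ> f) xs id)"

(* position m of n+1 in the cycle (c_1 = 1, c_2 = c 1, ...): c_{m} = c^{m-1}(1) = n+1 *)
definition cyc_pos :: "nat \<Rightarrow> (nat \<Rightarrow> nat) \<Rightarrow> nat" where
  "cyc_pos n c = (LEAST k. (c ^^ k) 1 = n + 1)"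

(* L_c = {c_2,...,c_{m-1}}, with c_j = c^{j-1}(1) *)
definition Lc :: "nat \<Rightarrow> (nat \<Rightarrow> nat) \<Rightarrow> nat set" where
  "Lc n c = {(c ^^ k) 1 | k. 0 < k \<and> k < cyc_pos n c}"

(* R_c = {c_{m+1},...,c_{n+1}} *)
definition Rc :: "nat \<Rightarrow> (nat \<Rightarrow> nat) \<Rightarrow> nat set" where
  "Rc n c = {(c ^^ k) 1 | k. cyc_pos n c < k \<and> k \<le> n}"

definition w0 :: "nat \<Rightarrow> nat \<Rightarrow> nat" where
  "w0 n = (\<lambda>i. if i \<in> {1..n+1} then n + 2 - i else i)"

definition rev_cox :: "nat \<Rightarrow> (nat \<Rightarrow> nat) \<Rightarrow> (nat \<Rightarrow> nat)" where
  "rev_cox n c = w0 n \<circ> c \<circ> inv (w0 n)"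

(* Partitions: lambda i is the (i+1)-th part (0-based indexing) *)
definition is_partition :: "(nat \<Rightarrow> nat) \<Rightarrow> bool" where
  "is_partition p \<longleftrightarrow> antimono p \<and> finite {i. p i \<noteq> 0}"

definition storable :: "(nat \<Rightarrow> nat) \<Rightarrow> (nat \<Rightarrow> nat) \<Rightarrow> bool" where
  "storable la mu \<longleftrightarrow> (\<forall>i. la i \<ge> mu i \<and> mu i \<ge> la (Suc i))"

definition st_pp where "st_pp la mu nu \<longleftrightarrow> storable la mu \<and> storable nu mu"
definition st_pm where "st_pm la mu nu \<longleftrightarrow> storable la mu \<and> storable mu nu"
definition st_mp where "st_mp la mu nu \<longleftrightarrow> storable mu la \<and> storable nu mu"
definition st_mm where "st_mm la mu nu \<longleftrightarrow> storable mu la \<and> storable mu nu"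

(* an n-tuple of partitions is a function k \<mapsto> pi^k, used for k \<in> {1..n};
   ext_tuple sets pi^0 = pi^{n+1} = (0) (and all other indices) *)
definition ext_tuple :: "nat \<Rightarrow> (nat \<Rightarrow> nat \<Rightarrow> nat) \<Rightarrow> nat \<Rightarrow> nat \<Rightarrow> nat" where
  "ext_tuple n pi k = (if k \<in> {1..n} then pi k else (\<lambda>_. 0))"

definition rev_tuple :: "nat \<Rightarrow> (nat \<Rightarrow> nat \<Rightarrow> nat) \<Rightarrow> nat \<Rightarrow> nat \<Rightarrow> nat" where
  "rev_tuple n pi = (\<lambda>k. pi (n + 1 - k))"

definition shift_down :: "nat set \<Rightarrow> nat set" where
  "shift_down A = (\<lambda>a. a - 1) ` A"   (* only applied to sets of positive naturals *)

definition c_storable :: "nat \<Rightarrow> (nat \<Rightarrow> nat) \<Rightarrow> (nat \<Rightarrow> nat \<Rightarrow> nat) \<Rightarrow> bool" where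
  "c_storable n c pi \<longleftrightarrow>
    (let L = Lc n c \<union> {1}; R = Rc n c \<union> {n + 1}; P = ext_tuple n pi;
         tr = (\<lambda>i. (P (i - 1), P i, P (Suc i))) in
     (\<forall>i\<in>{1..n}. is_partition (pi i)) \<and>
     (\<forall>i\<in>{1..n}.
        (i \<notin> L \<union> shift_down R \<longrightarrow> case_prod (\<lambda>a. case_prod (st_pp a)) (tr i)) \<and>
        (i \<in> shift_down R - L \<longrightarrow> case_prod (\<lambda>a. case_prod (st_pm a)) (tr i)) \<and>
        (i \<in> L - shift_down R \<longrightarrow> case_prod (\<lambda>a. case_prod (st_mp a)) (tr i)) \<and>
        (i \<in> L \<inter> shift_down R \<longrightarrow> case_prod (\<lambda>a. case_prod (st_mm a)) (tr i))) \<and>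
     (\<forall>k\<in>{1..n}. k \<notin> {Min L..Max R} \<longrightarrow> pi k = (\<lambda>_. 0)))"

end

theory Submission imports Defs "HOL-Combinatorics.Cycles" begin

abbreviation PP :: "nat list \<Rightarrow> nat \<Rightarrow> nat" where
  "PP xs \<equiv> foldr (\<lambda>i f. stransp i \<circ> f) xs id"

lemma PP_append: "PP (xs @ ys) = PP xs \<circ> PP ys"
  by (induct xs) auto

lemma stransp_eq: "stransp i = transpose i (Suc i)"
  by (auto simp: fun_eq_iff stransp_def transpose_def)

lemma PP_permutes: "(\<forall>i\<in>set xs. 1 \<le> i \<and> Suc i \<le> N) \<Longrightarrow> PP xs permutes {1..N}"
proof (induct xs)
  case Nil then show ?case using permutes_id[of "{1..N}"] by (simp add: id_def)
next
  case (Cons a xs)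
  have "stransp a permutes {1..N}" unfolding stransp_eq
    using Cons.prems by (intro permutes_swap_id) auto
  moreover have "PP xs permutes {1..N}" by (rule Cons.hyps) (use Cons.prems in auto)
  ultimately have "stransp a \<circ> PP xs permutes {1..N}" by (rule permutes_compose[rotated])
  moreover have "PP (a#xs) = stransp a \<circ> PP xs" by simp
  ultimately show ?case by metis
qed

lemma cox_cycle:
  "distinct xs \<Longrightarrow> set xs = {1..n} \<Longrightarrow>
   \<exists>cs. distinct cs \<and> set cs = {1..n+1} \<and> PP xs = cycle_of_list cs"
proof (induct n arbitrary: xs)
  case 0
  then have "xs = []" by auto
  then show ?case by (intro exI[of _ "[1]"]) auto
next
  case (Suc n)
  have "Suc n \<in> set xs" using Suc.prems(2) by auto
  then obtain ys zs where xs: "xs = ys @ Suc n # zs" by (meson split_list)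
  have d: "distinct (zs @ ys)" using Suc.prems unfolding xs by auto
  have "set (zs @ ys) = set xs - {Suc n}" using Suc.prems(1) unfolding xs by auto
  also have "\<dots> = {1..n}" unfolding Suc.prems(2) by (auto simp: atLeastAtMost_iff)
  finally have s: "set (zs @ ys) = {1..n}" .
  obtain cs0 where cs0: "distinct cs0" "set cs0 = {1..n+1}" "PP (zs @ ys) = cycle_of_list cs0"
    using Suc.hyps[OF d s] by blast
  have "Suc n \<in> set cs0" using cs0(2) by auto
  then obtain u v where uv: "cs0 = u @ Suc n # v" by (meson split_list)
  have rot: "rotate (length u) cs0 = Suc n # v @ u" using uv by (simp add: rotate_append)
  have c0: "cycle_of_list cs0 = cycle_of_list (Suc n # v @ u)"
    using cycle_of_list_rotate_independent[OF cs0(1), of "length u"] rot by simp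
  define cs1 where "cs1 = Suc (Suc n) # Suc n # v @ u"
  have cs1: "distinct cs1" "set cs1 = {1..Suc n + 1}"
  proof -
    have "Suc (Suc n) \<notin> set cs0" using cs0(2) by auto
    then show "distinct cs1" "set cs1 = {1..Suc n + 1}"
      using cs0(1,2) uv unfolding cs1_def by auto
  qed
  have "stransp (Suc n) \<circ> PP (zs @ ys) = transpose (Suc n) (Suc (Suc n)) \<circ> cycle_of_list (Suc n # v @ u)"
    by (subst cs0(3)) (simp only: c0 stransp_eq)
  also have "\<dots> = cycle_of_list cs1" by (simp add: cs1_def transpose_commute)
  finally have e1: "stransp (Suc n) \<circ> PP (zs @ ys) = cycle_of_list cs1" .
  define g where "g = PP ys"
  have gp: "g permutes {1..Suc n + 1}" unfolding g_def
  proof (intro PP_permutes ballI)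
    fix i assume "i \<in> set ys"
    then have "i \<in> {1..n}" using s by auto
    then show "1 \<le> i \<and> Suc i \<le> Suc n + 1" by auto
  qed
  then have bg: "bij g" by (rule permutes_bij)
  have "g \<circ> inv g = id" using bg by (simp add: fun_eq_iff bij_is_surj surj_f_inv_f)
  then have "PP xs = g \<circ> (stransp (Suc n) \<circ> PP (zs @ ys)) \<circ> inv g"
    unfolding xs PP_append g_def by (simp add: comp_assoc)
  also have "\<dots> = cycle_of_list (map g cs1)"
    unfolding e1 by (rule conjugation_of_cycle[OF cs1(1) bg])
  finally have "PP xs = cycle_of_list (map g cs1)" .
  moreover have "distinct (map g cs1)" using cs1(1) bg
    by (simp add: distinct_map bij_is_inj inj_on_subset[OF bij_is_inj[OF bg]])
  moreover have "set (map g cs1) = {1..Suc n + 1}"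
    using cs1(2) permutes_image[OF gp] by simp
  ultimately show ?case by blast
qed

lemma ww: "w0 n (w0 n x) = x"
  by (auto simp: w0_def)

lemma wiff: "(x = w0 n y) \<longleftrightarrow> (w0 n x = y)"
  by (metis ww)

lemma inv_w: "inv (w0 n) = w0 n"
  by (rule inv_equality) (simp_all add: ww)

lemma funpow_conj: "(w0 n \<circ> c \<circ> w0 n) ^^ k = w0 n \<circ> (c ^^ k) \<circ> w0 n"
proof (induct k)
  case 0 then show ?case by (simp add: fun_eq_iff ww)
next
  case (Suc k) then show ?case by (simp add: fun_eq_iff ww)
qed

lemma cox_orbit:
  assumes "coxeter n c"
  obtains f where "\<And>k. (c ^^ k) 1 = f k" "\<And>k. f k \<in> {1..n+1}"
    "\<And>k k'. f k = f k' \<longleftrightarrow> k mod (n+1) = k' mod (n+1)" "f 0 = 1"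
    "\<exists>m<n+1. f m = n+1"
proof -
  obtain xs where xs: "distinct xs" "set xs = {1..n}" "c = PP xs"
    using assms unfolding coxeter_def by blast
  obtain cs where cs: "distinct cs" "set cs = {1..n+1}" "c = cycle_of_list cs"
    using cox_cycle[OF xs(1,2)] xs(3) by blast
  have "1 \<in> set cs" using cs by auto
  then obtain u v where uv: "cs = u @ 1 # v" by (meson split_list)
  define cs' where "cs' = 1 # v @ u"
  have rot: "rotate (length u) cs = cs'" using uv by (simp add: rotate_append cs'_def)
  have c'1: "distinct cs'" using cs(1) rot distinct_rotate by metis
  have c'2: "set cs' = {1..n+1}" using cs(2) rot set_rotate by metis
  have c'3: "c = cycle_of_list cs'"
    using cs(3) rot cycle_of_list_rotate_independent[OF cs(1), of "length u"] by simp
  note c' = c'1 c'2 c'3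
  have len: "length cs' = n+1" using distinct_card[OF c'1] c'2 by simp
  define f where "f k = cs' ! (k mod (n+1))" for k
  have 1: "(c ^^ k) 1 = f k" for k
  proof -
    have "map (c ^^ k) cs' = rotate k cs'" using cyclic_rotation[OF c'(1)] c'(3) by simp
    then have "map (c ^^ k) cs' ! 0 = rotate k cs' ! 0" by simp
    then show ?thesis using len by (simp add: cs'_def nth_rotate f_def del: rotate_Suc)
  qed
  have 2: "f k \<in> {1..n+1}" for k
  proof -
    have "k mod (n+1) < length cs'" using len by simp
    then have "f k \<in> set cs'" unfolding f_def by (rule nth_mem)
    then show ?thesis using c'2 by simp
  qed
  have 3: "f k = f k' \<longleftrightarrow> k mod (n+1) = k' mod (n+1)" for k k'
    unfolding f_def using c'(1) len by (simp add: nth_eq_iff_index_eq)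
  have 4: "f 0 = 1" by (simp add: f_def cs'_def)
  have "n+1 \<in> set cs'" using c' by auto
  then obtain m where "m < n+1" "cs' ! m = n+1" using len by (metis in_set_conv_nth)
  then have 5: "\<exists>m<n+1. f m = n+1" unfolding f_def by (intro exI[of _ m]) simp
  show ?thesis using that 1 2 3 4 5 by blast
qed

lemma key:
  assumes "n \<ge> 1" "coxeter n c"
  shows "\<forall>x. x \<in> Lc n (rev_cox n c) \<longleftrightarrow> w0 n x \<in> Rc n c"
    and "\<forall>x. x \<in> Rc n (rev_cox n c) \<longleftrightarrow> w0 n x \<in> Lc n c"
proof -
  obtain f where f1: "\<And>k. (c ^^ k) 1 = f k" and f2: "\<And>k. f k \<in> {1..n+1}"
    and f3: "\<And>k k'. f k = f k' \<longleftrightarrow> k mod (n+1) = k' mod (n+1)" and f4: "f 0 = 1"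
    and f5: "\<exists>m<n+1. f m = n+1"
    using cox_orbit[OF assms(2)] by blast
  obtain m where m: "m < n+1" "f m = n+1" using f5 by blast
  have m0: "m \<noteq> 0"
  proof
    assume "m = 0" then show False using m f4 assms(1) by simp
  qed
  have cp: "cyc_pos n c = m" unfolding cyc_pos_def
  proof (rule Least_equality)
    show "(c ^^ m) 1 = n+1" using m f1 by simp
    fix k assume "(c ^^ k) 1 = n+1"
    then have "f k = f m" using m f1 by simp
    then have "k mod (n+1) = m mod (n+1)" by (simp only: f3)
    then have "k mod (n+1) = m" using m by simp
    then show "m \<le> k" by (metis mod_less_eq_dividend)
  qed
  define c' where "c' = rev_cox n c"
  have c'e: "c' = w0 n \<circ> c \<circ> w0 n" unfolding c'_def rev_cox_def inv_w ..
  have w1: "w0 n 1 = n+1" and wn: "w0 n (n+1) = 1" by (auto simp: w0_def)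
  have c'k: "(c' ^^ k) 1 = w0 n (f (k+m))" for k
  proof -
    have "(c' ^^ k) 1 = w0 n ((c ^^ k) (w0 n 1))"
      unfolding c'e funpow_conj by simp
    also have "w0 n 1 = (c ^^ m) 1" using w1 m f1[of m] by simp
    finally have "(c' ^^ k) 1 = w0 n ((c ^^ k) ((c ^^ m) 1))" .
    also have "\<dots> = w0 n (f (k+m))" by (metis f1 funpow_add comp_apply)
    finally show ?thesis .
  qed
  have fper: "f t = f (t - (n+1))" if "t \<ge> n+1" for t
    using that by (simp add: f3 le_mod_geq)
  have cp': "cyc_pos n c' = n+1-m" unfolding cyc_pos_def
  proof (rule Least_equality)
    have "f (n+1-m+m) = f 0" using m f3 by simp
    then show "(c' ^^ (n+1-m)) 1 = n+1" using c'k f4 w1 by simp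
    fix k assume "(c' ^^ k) 1 = n+1"
    then have "w0 n (f (k+m)) = w0 n 1" using c'k w1 by simp
    then have "f (k+m) = f 0" using f4 ww by metis
    then have "(k+m) mod (n+1) = 0" using f3 by simp
    show "n+1-m \<le> k"
    proof (rule ccontr)
      assume "\<not> n+1-m \<le> k"
      then have "k+m < n+1" by simp
      then have "(k+m) mod (n+1) = k+m" by simp
      then show False using \<open>(k+m) mod (n+1) = 0\<close> m0 by simp
    qed
  qed
  show "\<forall>x. x \<in> Lc n (rev_cox n c) \<longleftrightarrow> w0 n x \<in> Rc n c"
  proof
    fix x
    have "x \<in> Lc n c' \<longleftrightarrow> (\<exists>k. 0<k \<and> k<n+1-m \<and> w0 n x = f (k+m))"
      unfolding Lc_def cp' c'k by (auto simp: wiff)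
    also have "\<dots> \<longleftrightarrow> (\<exists>t. m<t \<and> t\<le>n \<and> w0 n x = f t)"
    proof
      assume "\<exists>k. 0<k \<and> k<n+1-m \<and> w0 n x = f (k+m)"
      then obtain k where "0<k" "k<n+1-m" "w0 n x = f (k+m)" by blast
      then show "\<exists>t. m<t \<and> t\<le>n \<and> w0 n x = f t" by (intro exI[of _ "k+m"]) auto
    next
      assume "\<exists>t. m<t \<and> t\<le>n \<and> w0 n x = f t"
      then obtain t where "m<t" "t\<le>n" "w0 n x = f t" by blast
      then show "\<exists>k. 0<k \<and> k<n+1-m \<and> w0 n x = f (k+m)" by (intro exI[of _ "t-m"]) auto
    qed
    also have "\<dots> \<longleftrightarrow> w0 n x \<in> Rc n c" unfolding Rc_def cp f1 by blast
    finally show "x \<in> Lc n (rev_cox n c) \<longleftrightarrow> w0 n x \<in> Rc n c" unfolding c'_def .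
  qed
  show "\<forall>x. x \<in> Rc n (rev_cox n c) \<longleftrightarrow> w0 n x \<in> Lc n c"
  proof
    fix x
    have "x \<in> Rc n c' \<longleftrightarrow> (\<exists>k. n+1-m<k \<and> k\<le>n \<and> w0 n x = f (k+m))"
      unfolding Rc_def cp' c'k by (auto simp: wiff)
    also have "\<dots> \<longleftrightarrow> (\<exists>t. 0<t \<and> t<m \<and> w0 n x = f t)"
    proof
      assume "\<exists>k. n+1-m<k \<and> k\<le>n \<and> w0 n x = f (k+m)"
      then obtain k where k: "n+1-m<k" "k\<le>n" "w0 n x = f (k+m)" by blast
      then have "w0 n x = f (k+m-(n+1))" using fper[of "k+m"] by simp
      then show "\<exists>t. 0<t \<and> t<m \<and> w0 n x = f t" using k m by (intro exI[of _ "k+m-(n+1)"]) auto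
    next
      assume "\<exists>t. 0<t \<and> t<m \<and> w0 n x = f t"
      then obtain t where t: "0<t" "t<m" "w0 n x = f t" by blast
      then have "w0 n x = f (t + (n+1))" using fper[of "t+(n+1)"] by simp
      then show "\<exists>k. n+1-m<k \<and> k\<le>n \<and> w0 n x = f (k+m)" using t m
        by (intro exI[of _ "t+(n+1)-m"]) auto
    qed
    also have "\<dots> \<longleftrightarrow> w0 n x \<in> Lc n c" unfolding Lc_def cp f1 by blast
    finally show "x \<in> Rc n (rev_cox n c) \<longleftrightarrow> w0 n x \<in> Lc n c" unfolding c'_def .
  qed
qed

lemma sd_iff: "1 \<le> i \<Longrightarrow> (i \<in> shift_down A \<longleftrightarrow> Suc i \<in> A)"
  unfolding shift_down_def by (auto simp: image_iff intro!: bexI[of _ "Suc i"])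

lemma ext_rev: "k \<le> n+1 \<Longrightarrow> ext_tuple n (rev_tuple n pi) k = ext_tuple n pi (n+1-k)"
  by (auto simp: ext_tuple_def rev_tuple_def)

lemma Lc_fin: "finite (Lc n d)"
proof -
  have "Lc n d \<subseteq> (\<lambda>k. (d ^^ k) 1) ` {..<cyc_pos n d}" unfolding Lc_def by auto
  then show ?thesis by (rule finite_subset) simp
qed

lemma Rc_fin: "finite (Rc n d)"
proof -
  have "Rc n d \<subseteq> (\<lambda>k. (d ^^ k) 1) ` {..n}" unfolding Rc_def by auto
  then show ?thesis by (rule finite_subset) simp
qed

theorem lemma4p9:
  fixes n :: nat and c :: "nat \<Rightarrow> nat" and pi :: "nat \<Rightarrow> nat \<Rightarrow> nat"
  assumes "n \<ge> 1" and "coxeter n c" and "c_storable n c pi"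
  shows "c_storable n (rev_cox n c) (rev_tuple n pi)"
proof -
  define c' where "c' = rev_cox n c"
  define pi' where "pi' = rev_tuple n pi"
  define L where "L = Lc n c \<union> {1}"
  define R where "R = Rc n c \<union> {n+1}"
  define L' where "L' = Lc n c' \<union> {1}"
  define R' where "R' = Rc n c' \<union> {n+1}"
  define P where "P = ext_tuple n pi"
  define P' where "P' = ext_tuple n pi'"
  have part: "\<forall>i\<in>{1..n}. is_partition (pi i)"
    and H: "\<forall>i\<in>{1..n}.
        (i \<notin> L \<union> shift_down R \<longrightarrow> st_pp (P (i - 1)) (P i) (P (Suc i))) \<and>
        (i \<in> shift_down R - L \<longrightarrow> st_pm (P (i - 1)) (P i) (P (Suc i))) \<and>
        (i \<in> L - shift_down R \<longrightarrow> st_mp (P (i - 1)) (P i) (P (Suc i))) \<and>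
        (i \<in> L \<inter> shift_down R \<longrightarrow> st_mm (P (i - 1)) (P i) (P (Suc i)))"
    using assms(3) unfolding c_storable_def Let_def L_def R_def P_def by simp_all
  have K1: "\<forall>x. x \<in> Lc n c' \<longleftrightarrow> w0 n x \<in> Rc n c"
    and K2: "\<forall>x. x \<in> Rc n c' \<longleftrightarrow> w0 n x \<in> Lc n c"
    using key[OF assms(1,2)] unfolding c'_def by blast+
  have part': "\<forall>i\<in>{1..n}. is_partition (pi' i)"
  proof
    fix i assume "i \<in> {1..n}"
    then have "n+1-i \<in> {1..n}" by auto
    then show "is_partition (pi' i)" using part unfolding pi'_def rev_tuple_def by blast
  qed
  have G: "(i \<notin> L' \<union> shift_down R' \<longrightarrow> st_pp (P' (i - 1)) (P' i) (P' (Suc i))) \<and>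
        (i \<in> shift_down R' - L' \<longrightarrow> st_pm (P' (i - 1)) (P' i) (P' (Suc i))) \<and>
        (i \<in> L' - shift_down R' \<longrightarrow> st_mp (P' (i - 1)) (P' i) (P' (Suc i))) \<and>
        (i \<in> L' \<inter> shift_down R' \<longrightarrow> st_mm (P' (i - 1)) (P' i) (P' (Suc i)))"
    if i: "i \<in> {1..n}" for i
  proof -
    define j where "j = n+1-i"
    have j: "j \<in> {1..n}" using i unfolding j_def by auto
    have e1: "P' (i-1) = P (Suc j)" unfolding P'_def P_def pi'_def
      using i by (subst ext_rev) (auto simp: j_def Suc_diff_le)
    have e2: "P' i = P j" unfolding P'_def P_def pi'_def j_def
      using i by (subst ext_rev) auto
    have e3: "P' (Suc i) = P (j - 1)" unfolding P'_def P_def pi'_def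
      using i by (subst ext_rev) (auto simp: j_def)
    have wi: "w0 n i = Suc j" using i by (auto simp: w0_def j_def)
    have wsi: "w0 n (Suc i) = j" using i by (auto simp: w0_def j_def)
    have M1: "i \<in> L' \<longleftrightarrow> j \<in> shift_down R"
      unfolding sd_iff[of j, OF conjunct1[OF j[unfolded atLeastAtMost_iff]]]
      unfolding L'_def R_def using K1 wi i by (auto simp: j_def)
    have M2: "i \<in> shift_down R' \<longleftrightarrow> j \<in> L"
      unfolding sd_iff[of i, OF conjunct1[OF i[unfolded atLeastAtMost_iff]]]
      unfolding R'_def L_def using K2 wsi i by (auto simp: j_def)
    have Hj: "(j \<notin> L \<union> shift_down R \<longrightarrow> st_pp (P (j - 1)) (P j) (P (Suc j))) \<and>
        (j \<in> shift_down R - L \<longrightarrow> st_pm (P (j - 1)) (P j) (P (Suc j))) \<and>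
        (j \<in> L - shift_down R \<longrightarrow> st_mp (P (j - 1)) (P j) (P (Suc j))) \<and>
        (j \<in> L \<inter> shift_down R \<longrightarrow> st_mm (P (j - 1)) (P j) (P (Suc j)))"
      using H j by blast
    show ?thesis unfolding e1 e2 e3 using Hj M1 M2
      by (auto simp: st_pp_def st_pm_def st_mp_def st_mm_def)
  qed
  have minL: "Min L' \<le> 1" unfolding L'_def by (rule Min_le) (simp_all add: Lc_fin)
  have maxR: "n+1 \<le> Max R'" unfolding R'_def by (rule Max_ge) (simp_all add: Rc_fin)
  have Z: "\<forall>k\<in>{1..n}. k \<notin> {Min L'..Max R'} \<longrightarrow> pi' k = (\<lambda>_. 0)"
    using minL maxR by auto
  show ?thesis
    unfolding c'_def[symmetric] pi'_def[symmetric] c_storable_def Let_def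
      L'_def[symmetric] R'_def[symmetric] P'_def[symmetric]
    using part' G Z by simp
qed
end
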